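(* Let $d\ge 2$ and let $n_k$ denote the number of vertices of the $k$-iterated line digraph $L^k(CK(d,4))$ of the cyclic Kautz digraph $CK(d,4)$; equivalently, $n_k$ is the number of words $a_1a_2\cdots a_{k+4}$ over the alphabet $\{0,1,\dots,d\}$ such that every block of four consecutive letters $a_ia_{i+1}a_{i+2}a_{i+3}$ satisfies $a_i\ne a_{i+1}$, $a_{i+1}\ne a_{i+2}$, $a_{i+2}\ne a_{i+3}$ and $a_i\ne a_{i+3}$. Then $n_0=d^4+d$, $n_1=d^5-d^4+d^3+2d^2-d$, and $$n_k=(d-1)\,n_{k-1}+n_{k-2}\qquad\text{for all } k\ge 2.$$ In particular, for $d=2$ the sequence is $18,30,48,78,126,\dots$ (satisfying the Fibonacci recurrence).
   Context: The cyclic Kautz digraph $CK(d,4)$ has as vertices all words $a_1a_2a_3a_4$ over $\{0,1,\dots,d\}$ with $a_i\ne a_{i+1}$ for $i=1,2,3$ and $a_1\ne a_4$, and an arc from $a_1a_2a_3a_4$ to $a_2a_3a_4a_5$ whenever $a_5\ne a_4$ and $a_5\ne a_2$. The line digraph $LG$ has as vertex set the set of arcs of $G$, with an arc from $e$ to $f$ whenever the head of $e$ equals the tail of $f$; $L^0G=G$, $L^kG=L(L^{k-1}G)$. *)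

theory Defs
  imports Main
begin

text \<open>Vertices of iterated line digraphs: a vertex of the base digraph is Base x;
an arc (u,v) of a digraph, which is a vertex of its line digraph, is Arc u v.\<close>

datatype 'a vtx = Base 'a | Arc "'a vtx" "'a vtx"

type_synonym 'a digraph = "'a vtx set \<times> ('a vtx \<times> 'a vtx) set"

definition line_digraph :: "'a digraph \<Rightarrow> 'a digraph" where
  "line_digraph G =
     ((\<lambda>(u, v). Arc u v) ` snd G,
      {(Arc u v, Arc v w) | u v w. (u, v) \<in> snd G \<and> (v, w) \<in> snd G})"

definition iter_line_digraph :: "nat \<Rightarrow> 'a digraph \<Rightarrow> 'a digraph" where
  "iter_line_digraph k G = (line_digraph ^^ k) G"

definition ck_word :: "nat \<Rightarrow> nat list \<Rightarrow> bool" where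
  "ck_word d w \<longleftrightarrow> length w = 4 \<and> (\<forall>a \<in> set w. a \<le> d) \<and>
     w ! 0 \<noteq> w ! 1 \<and> w ! 1 \<noteq> w ! 2 \<and> w ! 2 \<noteq> w ! 3 \<and> w ! 0 \<noteq> w ! 3"

definition cyclic_kautz4 :: "nat \<Rightarrow> nat list digraph" where
  "cyclic_kautz4 d =
     (Base ` {w. ck_word d w},
      {(Base [a1, a2, a3, a4], Base [a2, a3, a4, a5]) | a1 a2 a3 a4 a5.
         ck_word d [a1, a2, a3, a4] \<and> a5 \<le> d \<and> a5 \<noteq> a4 \<and> a5 \<noteq> a2})"

definition ck_words :: "nat \<Rightarrow> nat \<Rightarrow> nat list set" where
  "ck_words d m = {w. length w = m \<and> (\<forall>a \<in> set w. a \<le> d) \<and>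
     (\<forall>i. i + 3 < m \<longrightarrow> w ! i \<noteq> w ! (i+1) \<and> w ! (i+1) \<noteq> w ! (i+2) \<and>
                       w ! (i+2) \<noteq> w ! (i+3) \<and> w ! i \<noteq> w ! (i+3))}"

definition nCK :: "nat \<Rightarrow> nat \<Rightarrow> nat" where
  "nCK d k = card (fst (iter_line_digraph k (cyclic_kautz4 d)))"

end

theory Submission
  imports Defs
begin

definition V :: "nat \<Rightarrow> nat \<Rightarrow> nat list set" where
 "V d m = {w. length w = m \<and> (\<forall>a\<in>set w. a \<le> d) \<and> (\<forall>i. Suc i < m \<longrightarrow> w!i \<noteq> w!Suc i)
     \<and> (\<forall>i. i+3 < m \<longrightarrow> w!i \<noteq> w!(i+3))}"

definition ok :: "nat \<Rightarrow> nat list \<Rightarrow> nat \<Rightarrow> bool" where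
 "ok m w e = ((1 \<le> m \<longrightarrow> e \<noteq> w!(m-1)) \<and> (3 \<le> m \<longrightarrow> e \<noteq> w!(m-3)))"

lemma V_len: "w \<in> V d m \<Longrightarrow> length w = m" by (simp add: V_def)
lemma V_le: "w \<in> V d m \<Longrightarrow> i < m \<Longrightarrow> w!i \<le> d"
  by (auto simp: V_def)

lemma append_V: assumes "length w = m"
  shows "(w@[e] \<in> V d (Suc m)) = (w \<in> V d m \<and> e \<le> d \<and> ok m w e)"
proof
  assume H: "w@[e] \<in> V d (Suc m)"
  have c1: "\<And>i. Suc i < Suc m \<Longrightarrow> (w@[e])!i \<noteq> (w@[e])!Suc i"
   and c2: "\<And>i. i+3 < Suc m \<Longrightarrow> (w@[e])!i \<noteq> (w@[e])!(i+3)"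
   and c3: "\<forall>a\<in>set (w@[e]). a \<le> d" using H by (auto simp: V_def)
  have "w \<in> V d m" unfolding V_def
  proof (intro CollectI conjI allI impI)
    fix i assume "Suc i < m" then show "w!i \<noteq> w!Suc i" using c1[of i] assms by (simp add: nth_append)
  next
    fix i assume "i+3 < m" then show "w!i \<noteq> w!(i+3)" using c2[of i] assms by (simp add: nth_append)
  qed (use assms c3 in auto)
  moreover have "ok m w e" unfolding ok_def
  proof (intro conjI impI)
    assume "1 \<le> m" then show "e \<noteq> w!(m-1)" using c1[of "m-1"] assms by (simp add: nth_append)
  next
    assume "3 \<le> m" then show "e \<noteq> w!(m-3)" using c2[of "m-3"] assms by (simp add: nth_append)
  qed
  ultimately show "w \<in> V d m \<and> e \<le> d \<and> ok m w e" using c3 by auto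
next
  assume H: "w \<in> V d m \<and> e \<le> d \<and> ok m w e"
  have c1: "\<And>i. Suc i < m \<Longrightarrow> w!i \<noteq> w!Suc i"
   and c2: "\<And>i. i+3 < m \<Longrightarrow> w!i \<noteq> w!(i+3)"
   and c3: "\<forall>a\<in>set w. a \<le> d" using H by (auto simp: V_def)
  have o1: "1 \<le> m \<Longrightarrow> e \<noteq> w!(m-1)" and o2: "3 \<le> m \<Longrightarrow> e \<noteq> w!(m-3)" using H by (auto simp: ok_def)
  show "w@[e] \<in> V d (Suc m)" unfolding V_def
  proof (intro CollectI conjI allI impI)
    fix i assume i: "Suc i < Suc m"
    show "(w@[e])!i \<noteq> (w@[e])!Suc i"
    proof (cases "Suc i < m")
      case True then show ?thesis using c1[of i] assms by (simp add: nth_append)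
    next
      case False then have "i = m - 1" "1 \<le> m" using i by auto
      then show ?thesis using o1 assms by (simp add: nth_append)
    qed
  next
    fix i assume i: "i+3 < Suc m"
    show "(w@[e])!i \<noteq> (w@[e])!(i+3)"
    proof (cases "i+3 < m")
      case True then show ?thesis using c2[of i] assms by (simp add: nth_append)
    next
      case False then have "i = m - 3" "3 \<le> m" using i by auto
      then show ?thesis using o2 assms by (simp add: nth_append)
    qed
  qed (use assms c3 H in auto)
qed

lemma V_snoc: "z \<in> V d (Suc m) \<Longrightarrow> z = butlast z @ [last z]"
  by (metis V_len append_butlast_last_id list.size(3) nat.distinct(1))

lemma V_butlast: assumes "z \<in> V d (Suc m)" shows "butlast z \<in> V d m"
proof -
  have "length (butlast z) = m" using V_len[OF assms] by simp
  then show ?thesis using append_V[where w="butlast z" and m=m and d=d and e="last z"] V_snoc[OF assms] assms by simp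
qed

lemma V_tl: assumes "z \<in> V d (Suc m)" shows "tl z \<in> V d m"
proof -
  have l: "length z = Suc m" and s: "\<forall>a\<in>set z. a \<le> d"
   and c1: "\<And>i. Suc i < Suc m \<Longrightarrow> z!i \<noteq> z!Suc i"
   and c2: "\<And>i. i+3 < Suc m \<Longrightarrow> z!i \<noteq> z!(i+3)" using assms by (auto simp: V_def)
  show ?thesis unfolding V_def
  proof (intro CollectI conjI allI impI)
    show "\<forall>a\<in>set (tl z). a \<le> d" using s by (cases z) auto
  next
    fix i assume "Suc i < m" then show "tl z!i \<noteq> tl z!Suc i" using c1[of "Suc i"] l by (simp add: nth_tl)
  next
    fix i assume "i+3 < m" then show "tl z!i \<noteq> tl z!(i+3)" using c2[of "Suc i"] l by (simp add: nth_tl)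
  qed (use l in simp)
qed

lemma finV: "finite (V d m)"
proof -
  have "V d m \<subseteq> {xs. set xs \<subseteq> {..d} \<and> length xs = m}" by (auto simp: V_def)
  moreover have "finite {xs. set xs \<subseteq> {..d} \<and> length xs = m}" by (rule finite_lists_length_eq) simp
  ultimately show ?thesis by (rule finite_subset)
qed

lemma card_ext: "card {z \<in> V d (Suc m). Q z} = (\<Sum>w\<in>V d m. card {e. e \<le> d \<and> ok m w e \<and> Q (w@[e])})"
proof -
  let ?S = "SIGMA w:V d m. {e. e \<le> d \<and> ok m w e \<and> Q (w@[e])}"
  have eq: "{z \<in> V d (Suc m). Q z} = (\<lambda>(w,e). w@[e]) ` ?S"
  proof
    show "{z \<in> V d (Suc m). Q z} \<subseteq> (\<lambda>(w,e). w@[e]) ` ?S"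
    proof
      fix z assume z: "z \<in> {z \<in> V d (Suc m). Q z}"
      then have zV: "z \<in> V d (Suc m)" and Qz: "Q z" by auto
      have l: "length (butlast z) = m" using V_len[OF zV] by simp
      have "butlast z \<in> V d m \<and> last z \<le> d \<and> ok m (butlast z) (last z)"
        using append_V[OF l, where e="last z" and d=d] V_snoc[OF zV] zV by simp
      then have "(butlast z, last z) \<in> ?S" using Qz V_snoc[OF zV] by simp
      then show "z \<in> (\<lambda>(w,e). w@[e]) ` ?S" using V_snoc[OF zV] by (metis (no_types, lifting) case_prod_conv image_eqI)
    qed
  next
    show "(\<lambda>(w,e). w@[e]) ` ?S \<subseteq> {z \<in> V d (Suc m). Q z}"
    proof
      fix z assume "z \<in> (\<lambda>(w,e). w@[e]) ` ?S"
      then obtain w e where z: "z = w@[e]" and w: "w \<in> V d m" and e: "e \<le> d" "ok m w e" "Q (w@[e])" by auto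
      show "z \<in> {z \<in> V d (Suc m). Q z}" using append_V[OF V_len[OF w], where e=e and d=d] w e z by simp
    qed
  qed
  have inj: "inj_on (\<lambda>(w,e). w@[e]) ?S" by (auto simp: inj_on_def)
  have "card {z \<in> V d (Suc m). Q z} = card ?S" unfolding eq by (rule card_image[OF inj])
  also have "\<dots> = (\<Sum>w\<in>V d m. card {e. e \<le> d \<and> ok m w e \<and> Q (w@[e])})"
    by (rule card_SigmaI[OF finV]) auto
  finally show ?thesis .
qed

definition nV where "nV d m = card (V d m)"
definition aV where "aV d m = card {w \<in> V d m. w!(m-3) = w!(m-1)}"

lemma V0: "V d 0 = {[]}" by (auto simp: V_def)

lemma card_ext_all: "card (V d (Suc m)) = (\<Sum>w\<in>V d m. card {e. e \<le> d \<and> ok m w e})"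
  using card_ext[where Q="\<lambda>_. True" and d=d and m=m] by simp

lemma cnt1: "(x::nat) \<le> d \<Longrightarrow> card {e. e \<le> d \<and> e \<noteq> x} = d"
proof -
  assume x: "x \<le> d"
  have "{e. e \<le> d \<and> e \<noteq> x} = {..d} - {x}" by auto
  then show ?thesis using x by simp
qed

lemma cnt2: "(x::nat) \<le> d \<Longrightarrow> y \<le> d \<Longrightarrow> x \<noteq> y \<Longrightarrow> card {e. e \<le> d \<and> e \<noteq> x \<and> e \<noteq> y} = d - 1"
proof -
  assume x: "x \<le> d" "y \<le> d" "x \<noteq> y"
  have "{e. e \<le> d \<and> e \<noteq> x \<and> e \<noteq> y} = {..d} - {x,y}" by auto
  moreover have "card ({..d} - {x,y}) = card {..d} - card {x,y}" by (rule card_Diff_subset) (use x in auto)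
  ultimately show ?thesis using x by simp
qed

lemma n1: "nV d 1 = d + 1"
  using card_ext_all[where d=d and m=0] by (simp add: nV_def V0 ok_def)

lemma n2: "nV d 2 = (d + 1) * d"
proof -
  have "nV d 2 = (\<Sum>w\<in>V d 1. card {e. e \<le> d \<and> ok 1 w e})"
    using card_ext_all[where d=d and m=1] by (simp add: nV_def numeral_2_eq_2)
  also have "\<dots> = (\<Sum>w\<in>V d 1. d)"
    by (rule sum.cong) (auto simp: ok_def intro!: cnt1 V_le)
  finally show ?thesis using n1 by (simp add: nV_def)
qed

lemma n3: "nV d 3 = (d + 1) * d * d"
proof -
  have "nV d 3 = (\<Sum>w\<in>V d 2. card {e. e \<le> d \<and> ok 2 w e})"
    using card_ext_all[where d=d and m=2] by (simp add: nV_def numeral_3_eq_3 numeral_2_eq_2)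
  also have "\<dots> = (\<Sum>w\<in>V d 2. d)"
    by (rule sum.cong) (auto simp: ok_def intro!: cnt1 V_le)
  finally show ?thesis using n2 by (simp add: nV_def)
qed

lemma a3: "aV d 3 = (d + 1) * d"
proof -
  have "aV d 3 = card {z \<in> V d (Suc 2). z!0 = z!2}" by (simp add: aV_def numeral_3_eq_3 numeral_2_eq_2)
  also have "\<dots> = (\<Sum>w\<in>V d 2. card {e. e \<le> d \<and> ok 2 w e \<and> (w@[e])!0 = (w@[e])!2})"
    by (rule card_ext)
  also have "\<dots> = (\<Sum>w\<in>V d 2. 1)"
  proof (rule sum.cong)
    fix w assume w: "w \<in> V d 2"
    have l: "length w = 2" using V_len[OF w] .
    have ne: "w!0 \<noteq> w!1" using w by (auto simp: V_def)
    have le: "w!0 \<le> d" using V_le[OF w, of 0] by simp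
    have "{e. e \<le> d \<and> ok 2 w e \<and> (w@[e])!0 = (w@[e])!2} = {w!0}"
      using l ne le by (auto simp: ok_def nth_append)
    then show "card {e. e \<le> d \<and> ok 2 w e \<and> (w@[e])!0 = (w@[e])!2} = 1" by simp
  qed simp
  finally show ?thesis using n2 by (simp add: nV_def)
qed

lemma a_le_n: "aV d m \<le> nV d m"
  unfolding aV_def nV_def by (rule card_mono[OF finV]) auto

lemma nstep: assumes "3 \<le> m" shows "nV d (Suc m) = d * aV d m + (d - 1) * (nV d m - aV d m)"
proof -
  let ?P = "\<lambda>w. w!(m-3) = w!(m-1)"
  have "nV d (Suc m) = (\<Sum>w\<in>V d m. card {e. e \<le> d \<and> ok m w e})"
    using card_ext_all by (simp add: nV_def)
  also have "\<dots> = (\<Sum>w\<in>V d m. if ?P w then d else d - 1)"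
  proof (rule sum.cong)
    fix w assume w: "w \<in> V d m"
    have le1: "w!(m-1) \<le> d" and le3: "w!(m-3) \<le> d" using V_le[OF w] assms by auto
    show "card {e. e \<le> d \<and> ok m w e} = (if ?P w then d else d - 1)"
    proof (cases "?P w")
      case True
      then have "{e. e \<le> d \<and> ok m w e} = {e. e \<le> d \<and> e \<noteq> w!(m-1)}" using assms by (auto simp: ok_def)
      then show ?thesis using True cnt1[OF le1] by simp
    next
      case False
      then have "{e. e \<le> d \<and> ok m w e} = {e. e \<le> d \<and> e \<noteq> w!(m-1) \<and> e \<noteq> w!(m-3)}" using assms by (auto simp: ok_def)
      then show ?thesis using False cnt2[OF le1 le3] by simp
    qed
  qed simp
  also have "\<dots> = d * card (V d m \<inter> {w. ?P w}) + (d - 1) * card (V d m - {w. ?P w})"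
    by (simp add: sum.If_cases[OF finV] Diff_eq)
  also have "card (V d m \<inter> {w. ?P w}) = aV d m" unfolding aV_def by (metis Collect_conj_eq Collect_mem_eq)
  also have "card (V d m - {w. ?P w}) = nV d m - aV d m"
    unfolding nV_def using \<open>card (V d m \<inter> {w. ?P w}) = aV d m\<close> by (simp add: card_Diff_subset_Int finV)
  finally show ?thesis .
qed

lemma astep: assumes "3 \<le> m" shows "aV d (Suc m) = nV d m"
proof -
  have "aV d (Suc m) = card {z \<in> V d (Suc m). z!(m-2) = z!m}"
    using assms by (simp add: aV_def numeral_3_eq_3 numeral_2_eq_2)
  also have "\<dots> = (\<Sum>w\<in>V d m. card {e. e \<le> d \<and> ok m w e \<and> (w@[e])!(m-2) = (w@[e])!m})"
    by (rule card_ext)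
  also have "\<dots> = (\<Sum>w\<in>V d m. 1)"
  proof (rule sum.cong)
    fix w assume w: "w \<in> V d m"
    have l: "length w = m" using V_len[OF w] .
    have c1: "\<forall>i. Suc i < m \<longrightarrow> w!i \<noteq> w!Suc i" using w by (simp add: V_def)
    have "w!(m-2) \<noteq> w!Suc(m-2)" using c1 assms by simp
    moreover have "Suc (m-2) = m-1" using assms by arith
    ultimately have ne: "w!(m-2) \<noteq> w!(m-1)" by simp
    have "w!(m-3) \<noteq> w!Suc(m-3)" using c1 assms by simp
    moreover have "Suc (m-3) = m-2" using assms by arith
    ultimately have ne3: "w!(m-3) \<noteq> w!(m-2)" by simp
    have le: "w!(m-2) \<le> d" using V_le[OF w, of "m-2"] assms by simp
    have "{e. e \<le> d \<and> ok m w e \<and> (w@[e])!(m-2) = (w@[e])!m} = {w!(m-2)}"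
      using l ne ne3 le assms by (auto simp: ok_def nth_append)
    then show "card {e. e \<le> d \<and> ok m w e \<and> (w@[e])!(m-2) = (w@[e])!m} = 1" by simp
  qed simp
  finally show ?thesis by (simp add: nV_def)
qed

function enc :: "nat list \<Rightarrow> nat list vtx" where
  "enc w = (if length w \<le> 4 then Base w else Arc (enc (butlast w)) (enc (tl w)))"
  by auto
termination by (relation "measure length") auto

declare enc.simps[simp del]

lemma enc_le: "length w \<le> 4 \<Longrightarrow> enc w = Base w" by (simp add: enc.simps)
lemma enc_gt: "4 < length w \<Longrightarrow> enc w = Arc (enc (butlast w)) (enc (tl w))" by (simp add: enc.simps)

lemma enc_inj: "length v = length w \<Longrightarrow> enc v = enc w \<Longrightarrow> v = w"
proof (induction v arbitrary: w rule: length_induct)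
  case (1 v)
  note IH = 1(1)[rule_format] and L = 1(2) and E = 1(3)
  show ?case
  proof (cases "length v \<le> 4")
    case True then have "Base v = Base w" using E L enc_le by metis
    then show ?thesis by simp
  next
    case False
    then have g: "4 < length v" "4 < length w" using L by auto
    have e1: "enc (butlast v) = enc (butlast w)" and e2: "enc (tl v) = enc (tl w)"
      using E enc_gt[OF g(1)] enc_gt[OF g(2)] by simp_all
    have b: "butlast v = butlast w" using IH[of "butlast v" "butlast w"] e1 L g by simp
    have t: "tl v = tl w" using IH[of "tl v" "tl w"] e2 L g by simp
    show ?thesis
    proof (rule nth_equalityI)
      show "length v = length w" by fact
    next
      fix i assume i: "i < length v"
      show "v!i = w!i"
      proof (cases "i < length v - 1")
        case True
        then have "butlast v ! i = v ! i" "butlast w ! i = w ! i" using L by (simp_all add: nth_butlast)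
        then show ?thesis using b by simp
      next
        case False then have ii: "i = Suc (i - 1)" using g by auto
        have "tl v ! (i-1) = v ! i" "tl w ! (i-1) = w ! i" using i L ii by (simp_all add: nth_tl)
        then show ?thesis using t by simp
      qed
    qed
  qed
qed

lemma W_V: assumes "4 \<le> m" shows "ck_words d m = V d m"
proof
  show "ck_words d m \<subseteq> V d m"
  proof
    fix w assume w: "w \<in> ck_words d m"
    have c: "\<And>i. i + 3 < m \<Longrightarrow> w ! i \<noteq> w ! (i+1) \<and> w ! (i+1) \<noteq> w ! (i+2) \<and>
                       w ! (i+2) \<noteq> w ! (i+3) \<and> w ! i \<noteq> w ! (i+3)" using w by (auto simp: ck_words_def)
    show "w \<in> V d m" unfolding V_def
    proof (intro CollectI conjI allI impI)
      fix i assume i: "Suc i < m"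
      show "w!i \<noteq> w!Suc i"
      proof (cases "i+3 < m")
        case True then show ?thesis using c[of i] by simp
      next
        case False
        show ?thesis
        proof (cases "2 \<le> i")
          case True then have "i - 2 + 3 < m" "i - 2 + 2 = i" "i - 2 + 3 = Suc i" using i by auto
          then show ?thesis using c[of "i-2"] by metis
        next
          case False then have "i = 1" using \<open>\<not> i+3<m\<close> assms by auto
          then show ?thesis using c[of 0] assms by simp
        qed
      qed
    qed (use w c in \<open>auto simp: ck_words_def\<close>)
  qed
next
  show "V d m \<subseteq> ck_words d m"
  proof
    fix w assume w: "w \<in> V d m"
    have c1: "\<And>i. Suc i < m \<Longrightarrow> w!i \<noteq> w!Suc i" and c2: "\<And>i. i+3 < m \<Longrightarrow> w!i \<noteq> w!(i+3)"
      and l: "length w = m" and s: "\<forall>a\<in>set w. a \<le> d" using w by (auto simp: V_def)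
    have "\<forall>i. i + 3 < m \<longrightarrow> w ! i \<noteq> w ! (i+1) \<and> w ! (i+1) \<noteq> w ! (i+2) \<and>
                       w ! (i+2) \<noteq> w ! (i+3) \<and> w ! i \<noteq> w ! (i+3)"
    proof (intro allI impI)
      fix i assume i: "i+3 < m"
      have "w!i \<noteq> w!Suc i" using c1[of i] i by simp
      moreover have "w!Suc i \<noteq> w!Suc (Suc i)" using c1[of "Suc i"] i by simp
      moreover have "w!Suc (Suc i) \<noteq> w!Suc (Suc (Suc i))" using c1[of "Suc (Suc i)"] i by simp
      moreover have "w!i \<noteq> w!(i+3)" using c2 i by simp
      ultimately show "w ! i \<noteq> w ! (i+1) \<and> w ! (i+1) \<noteq> w ! (i+2) \<and>
                       w ! (i+2) \<noteq> w ! (i+3) \<and> w ! i \<noteq> w ! (i+3)"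
        by (simp add: numeral_3_eq_3 numeral_2_eq_2)
    qed
    then show "w \<in> ck_words d m" unfolding ck_words_def using l s by simp
  qed
qed

lemma all3: "(\<forall>i. Suc i < 4 \<longrightarrow> P i) = (P 0 \<and> P 1 \<and> P (2::nat))"
proof
  assume "P 0 \<and> P 1 \<and> P (2::nat)"
  then show "\<forall>i. Suc i < 4 \<longrightarrow> P i"
    by (metis One_nat_def Suc_1 less_Suc_eq less_one numeral_3_eq_3 numeral_eq_Suc pred_numeral_simps(2) Suc_less_eq semiring_norm(26) semiring_norm(27))
qed auto

lemma all1: "(\<forall>i. i + 3 < (4::nat) \<longrightarrow> P i) = P 0" by auto

lemma ckV: "ck_word d w = (w \<in> V d 4)"
  unfolding ck_word_def V_def by (simp only: all3 all1 mem_Collect_eq) (auto simp: numeral_2_eq_2 numeral_3_eq_3)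

lemma encV4: "enc ` V d 4 = Base ` V d 4"
  by (rule image_cong) (auto simp: enc_le V_len)

lemma base_arcs: "snd (cyclic_kautz4 d) = (\<lambda>x. (enc (butlast x), enc (tl x))) ` V d 5"
proof
  show "snd (cyclic_kautz4 d) \<subseteq> (\<lambda>x. (enc (butlast x), enc (tl x))) ` V d 5"
  proof
    fix p assume "p \<in> snd (cyclic_kautz4 d)"
    then obtain a1 a2 a3 a4 a5 where p: "p = (Base [a1, a2, a3, a4], Base [a2, a3, a4, a5])"
      and c: "ck_word d [a1, a2, a3, a4]" "a5 \<le> d" "a5 \<noteq> a4" "a5 \<noteq> a2"
      by (auto simp: cyclic_kautz4_def)
    have "[a1,a2,a3,a4] @ [a5] \<in> V d (Suc 4)"
      using append_V[where w="[a1,a2,a3,a4]" and m=4 and e=a5 and d=d] c ckV by (simp add: ok_def)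
    then have "[a1,a2,a3,a4,a5] \<in> V d 5" by simp
    moreover have "p = (enc (butlast [a1,a2,a3,a4,a5]), enc (tl [a1,a2,a3,a4,a5]))"
      using p by (simp add: enc_le)
    ultimately show "p \<in> (\<lambda>x. (enc (butlast x), enc (tl x))) ` V d 5" by blast
  qed
next
  show "(\<lambda>x. (enc (butlast x), enc (tl x))) ` V d 5 \<subseteq> snd (cyclic_kautz4 d)"
  proof
    fix p assume "p \<in> (\<lambda>x. (enc (butlast x), enc (tl x))) ` V d 5"
    then obtain x where x: "x \<in> V d 5" and p: "p = (enc (butlast x), enc (tl x))" by auto
    have "length x = Suc (Suc (Suc (Suc (Suc 0))))" using V_len[OF x] by simp
    then obtain a1 a2 a3 a4 a5 where xe: "x = [a1,a2,a3,a4,a5]" by (auto simp: length_Suc_conv)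
    have "[a1,a2,a3,a4] @ [a5] \<in> V d (Suc 4)" using x xe by simp
    then have c: "[a1,a2,a3,a4] \<in> V d 4" "a5 \<le> d" "ok 4 [a1,a2,a3,a4] a5"
      using append_V[where w="[a1,a2,a3,a4]" and m=4 and e=a5 and d=d] by auto
    have p2: "p = (Base [a1, a2, a3, a4], Base [a2, a3, a4, a5])" using p xe by (simp add: enc_le)
    show "p \<in> snd (cyclic_kautz4 d)" unfolding cyclic_kautz4_def snd_conv p2
      using c ckV by (auto simp: ok_def)
  qed
qed


lemma graph: "fst (iter_line_digraph k (cyclic_kautz4 d)) = enc ` V d (k+4) \<and>
   snd (iter_line_digraph k (cyclic_kautz4 d)) = (\<lambda>x. (enc (butlast x), enc (tl x))) ` V d (k+5)"
proof (induction k)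
  case 0
  have "fst (cyclic_kautz4 d) = enc ` V d 4" unfolding encV4 cyclic_kautz4_def using ckV by auto
  then show ?case using base_arcs by (simp add: iter_line_digraph_def)
next
  case (Suc k)
  let ?G = "iter_line_digraph k (cyclic_kautz4 d)"
  let ?f = "\<lambda>x. (enc (butlast x), enc (tl x))"
  have G: "iter_line_digraph (Suc k) (cyclic_kautz4 d) = line_digraph ?G"
    by (simp add: iter_line_digraph_def)
  have F: "fst ?G = enc ` V d (k+4)" and S: "snd ?G = ?f ` V d (k+5)" using Suc by auto
  have v: "fst (line_digraph ?G) = enc ` V d (Suc k + 4)"
  proof -
    have "fst (line_digraph ?G) = (\<lambda>x. Arc (enc (butlast x)) (enc (tl x))) ` V d (k+5)"
      unfolding line_digraph_def S by (simp add: image_image)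
    also have "\<dots> = enc ` V d (k+5)"
      by (rule image_cong) (auto simp: enc_gt V_len)
    finally show ?thesis by (simp add: add.commute)
  qed
  have a: "snd (line_digraph ?G) = ?f ` V d (Suc k + 5)"
  proof
    show "snd (line_digraph ?G) \<subseteq> ?f ` V d (Suc k + 5)"
    proof
      fix p assume "p \<in> snd (line_digraph ?G)"
      then obtain u v w where p: "p = (Arc u v, Arc v w)" and uv: "(u,v) \<in> ?f ` V d (k+5)"
        and vw: "(v,w) \<in> ?f ` V d (k+5)" unfolding line_digraph_def S by auto
      obtain x where x: "x \<in> V d (k+5)" and ux: "u = enc (butlast x)" "v = enc (tl x)" using uv by auto
      obtain y where y: "y \<in> V d (k+5)" and vy: "v = enc (butlast y)" "w = enc (tl y)" using vw by auto
      have lx: "length x = k+5" and ly: "length y = k+5" using x y V_len by auto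
      have txy: "tl x = butlast y" using enc_inj[of "tl x" "butlast y"] lx ly ux vy by simp
      have yS: "y \<in> V d (Suc (k+4))" using y by (simp add: add.commute)
      have ye: "y = tl x @ [last y]" using V_snoc[OF yS] txy by simp
      have ltx: "length (tl x) = k+4" using lx by simp
      have "tl x @ [last y] \<in> V d (Suc (k+4))" using ye yS by simp
      then have ly2: "last y \<le> d" "ok (k+4) (tl x) (last y)" using append_V[OF ltx] by auto
      have okx: "ok (k+5) x (last y)" using ly2(2) lx by (simp add: ok_def nth_tl)
      define z where "z = x @ [last y]"
      have zV: "z \<in> V d (Suc k + 5)" using append_V[OF lx, where e="last y" and d=d] x ly2 okx
        unfolding z_def by simp
      have bz: "butlast z = x" unfolding z_def by simp
      have tz: "tl z = y" unfolding z_def using lx ye by (cases x) auto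
      have "p = ?f z" unfolding p bz tz using ux vy lx ly enc_gt[of x] enc_gt[of y] by simp
      then show "p \<in> ?f ` V d (Suc k + 5)" using zV by blast
    qed
  next
    show "?f ` V d (Suc k + 5) \<subseteq> snd (line_digraph ?G)"
    proof
      fix p assume "p \<in> ?f ` V d (Suc k + 5)"
      then obtain z where z: "z \<in> V d (Suc (k + 5))" and p: "p = ?f z" by auto
      have x: "butlast z \<in> V d (k+5)" and y: "tl z \<in> V d (k+5)" using V_butlast[OF z] V_tl[OF z] by auto
      have lx: "length (butlast z) = k+5" and ly: "length (tl z) = k+5" using V_len[OF x] V_len[OF y] by auto
      have m: "tl (butlast z) = butlast (tl z)" by (simp add: butlast_tl)
      have "(enc (butlast (butlast z)), enc (tl (butlast z))) \<in> snd ?G" using S x by blast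
      moreover have "(enc (butlast (tl z)), enc (tl (tl z))) \<in> snd ?G" using S y by blast
      moreover have "enc (butlast z) = Arc (enc (butlast (butlast z))) (enc (tl (butlast z)))"
        using lx enc_gt[of "butlast z"] by simp
      moreover have "enc (tl z) = Arc (enc (butlast (tl z))) (enc (tl (tl z)))"
        using ly enc_gt[of "tl z"] by simp
      ultimately show "p \<in> snd (line_digraph ?G)" unfolding line_digraph_def p m by auto
    qed
  qed
  show ?case using v a G by simp
qed


lemma nCK_nV: "nCK d k = nV d (k+4)"
proof -
  have "inj_on enc (V d (k+4))"
  proof (rule inj_onI)
    fix x y assume "x \<in> V d (k+4)" "y \<in> V d (k+4)" "enc x = enc y"
    then show "x = y" using enc_inj[of x y] V_len by metis
  qed
  then show ?thesis unfolding nCK_def nV_def using graph[of k d] by (simp add: card_image)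
qed

lemma istep: assumes "3 \<le> m" "1 \<le> d"
  shows "int (nV d (Suc m)) = int d * int (aV d m) + (int d - 1) * (int (nV d m) - int (aV d m))"
  using nstep[OF assms(1), of d] a_le_n[of d m] assms(2) by (simp add: of_nat_diff)

theorem mainTheorem10:
  fixes d :: nat
  assumes "d \<ge> 2"
  shows "(\<forall>k. nCK d k = card (ck_words d (k + 4)))
       \<and> nCK d 0 = d ^ 4 + d
       \<and> int (nCK d 1) = int d ^ 5 - int d ^ 4 + int d ^ 3 + 2 * int d ^ 2 - int d
       \<and> (\<forall>k \<ge> 2. nCK d k = (d - 1) * nCK d (k - 1) + nCK d (k - 2))"
proof (intro conjI allI impI)
  have d1: "1 \<le> d" using assms by simp
  fix k show "nCK d k = card (ck_words d (k + 4))" by (simp add: nCK_nV nV_def W_V)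
next
  have d1: "1 \<le> d" using assms by simp
  have N3: "int (nV d 3) = (int d + 1) * int d * int d" by (simp only: n3 of_nat_mult of_nat_add of_nat_1)
  have A3: "int (aV d 3) = (int d + 1) * int d" by (simp only: a3 of_nat_mult of_nat_add of_nat_1)
  have N4: "int (nV d 4) = int d * int (aV d 3) + (int d - 1) * (int (nV d 3) - int (aV d 3))"
    using istep[of 3 d] d1 by (simp add: numeral_eq_Suc)
  have "int (nV d 4) = int d ^ 4 + int d" unfolding N4 N3 A3 by (simp add: algebra_simps power_def numeral_eq_Suc)
  then have "nV d 4 = d^4 + d" by (metis of_nat_add of_nat_eq_iff of_nat_power)
  then show "nCK d 0 = d ^ 4 + d" by (simp add: nCK_nV)
next
  have d1: "1 \<le> d" using assms by simp
  have N3: "int (nV d 3) = (int d + 1) * int d * int d" by (simp only: n3 of_nat_mult of_nat_add of_nat_1)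
  have A3: "int (aV d 3) = (int d + 1) * int d" by (simp only: a3 of_nat_mult of_nat_add of_nat_1)
  have N4: "int (nV d 4) = int d * int (aV d 3) + (int d - 1) * (int (nV d 3) - int (aV d 3))"
    using istep[of 3 d] d1 by (simp add: numeral_eq_Suc)
  have A4: "aV d 4 = nV d 3" using astep[of 3 d] by (simp add: numeral_eq_Suc)
  have N5: "int (nV d 5) = int d * int (aV d 4) + (int d - 1) * (int (nV d 4) - int (aV d 4))"
    using istep[of 4 d] d1 by (simp add: numeral_eq_Suc)
  have "int (nV d 5) = int d ^ 5 - int d ^ 4 + int d ^ 3 + 2 * int d ^ 2 - int d"
    unfolding N5 A4 N4 N3 A3 by (simp add: algebra_simps power_def numeral_eq_Suc)
  then show "int (nCK d 1) = int d ^ 5 - int d ^ 4 + int d ^ 3 + 2 * int d ^ 2 - int d" by (simp add: nCK_nV)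
next
  fix k :: nat assume k: "2 \<le> k"
  have d1: "1 \<le> d" using assms by simp
  obtain j where j: "k = Suc (Suc j)" using k by (metis add_2_eq_Suc le_Suc_ex)
  have e1: "int (nV d (Suc (Suc j + 4))) = int d * int (aV d (Suc j + 4)) + (int d - 1) * (int (nV d (Suc j + 4)) - int (aV d (Suc j + 4)))"
    using istep[of "Suc j + 4" d] d1 by simp
  have e2: "aV d (Suc j + 4) = nV d (j + 4)" using astep[of "j+4" d] by simp
  have "int (nV d (Suc (Suc j + 4))) = (int d - 1) * int (nV d (Suc j + 4)) + int (nV d (j+4))"
    unfolding e1 e2 by (simp add: algebra_simps)
  then have "int (nV d (Suc (Suc j + 4))) = int ((d - 1) * nV d (Suc j + 4) + nV d (j+4))"
    using d1 by (simp add: of_nat_diff)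
  then have "nV d (Suc (Suc j + 4)) = (d - 1) * nV d (Suc j + 4) + nV d (j+4)" by (simp only: of_nat_eq_iff)
  then show "nCK d k = (d - 1) * nCK d (k - 1) + nCK d (k - 2)" using j by (simp add: nCK_nV)
qed

end
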